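(* Let $D$ be a connected locally finite C-homogeneous digraph and let $x\in VD$. Then neither the subdigraph induced by $N^+(x)$ nor the subdigraph induced by $N^-(x)$ is isomorphic to the directed cycle $C_4$ of length 4.
   Context: A digraph has an irreflexive, antisymmetric edge relation; connectedness and local finiteness refer to the underlying undirected graph. $D$ is C-homogeneous if every isomorphism between finite connected induced subdigraphs extends to an automorphism of $D$. $N^+(x)=\{y: xy\in ED\}$, $N^-(x)=\{y: yx\in ED\}$. *)

theory Defs
  imports Main
begin

definition digraph :: "'a set \<Rightarrow> ('a \<Rightarrow> 'a \<Rightarrow> bool) \<Rightarrow> bool" where
  "digraph V E \<longleftrightarrow> (\<forall>x y. E x y \<longrightarrow> x \<in> V \<and> y \<in> V)
     \<and> (\<forall>x. \<not> E x x) \<and> (\<forall>x y. E x y \<longrightarrow> \<not> E y x)"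

definition out_nbhd :: "('a \<Rightarrow> 'a \<Rightarrow> bool) \<Rightarrow> 'a \<Rightarrow> 'a set" where
  "out_nbhd E x = {y. E x y}"

definition in_nbhd :: "('a \<Rightarrow> 'a \<Rightarrow> bool) \<Rightarrow> 'a \<Rightarrow> 'a set" where
  "in_nbhd E x = {y. E y x}"

definition induced_connected :: "('a \<Rightarrow> 'a \<Rightarrow> bool) \<Rightarrow> 'a set \<Rightarrow> bool" where
  "induced_connected E A \<longleftrightarrow> A \<noteq> {} \<and>
     (\<forall>x\<in>A. \<forall>y\<in>A. (\<lambda>u v. u \<in> A \<and> v \<in> A \<and> (E u v \<or> E v u))\<^sup>*\<^sup>* x y)"

definition locally_finite :: "'a set \<Rightarrow> ('a \<Rightarrow> 'a \<Rightarrow> bool) \<Rightarrow> bool" where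
  "locally_finite V E \<longleftrightarrow> (\<forall>x\<in>V. finite (out_nbhd E x \<union> in_nbhd E x))"

definition induced_iso :: "('a \<Rightarrow> 'a \<Rightarrow> bool) \<Rightarrow> 'a set \<Rightarrow> 'a set \<Rightarrow> ('a \<Rightarrow> 'a) \<Rightarrow> bool" where
  "induced_iso E A B f \<longleftrightarrow> bij_betw f A B \<and> (\<forall>x\<in>A. \<forall>y\<in>A. E x y \<longleftrightarrow> E (f x) (f y))"

definition C_homogeneous :: "'a set \<Rightarrow> ('a \<Rightarrow> 'a \<Rightarrow> bool) \<Rightarrow> bool" where
  "C_homogeneous V E \<longleftrightarrow>
     (\<forall>A B f. A \<subseteq> V \<and> B \<subseteq> V \<and> finite A \<and> induced_connected E A
        \<and> induced_iso E A B f \<longrightarrow>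
        (\<exists>g. induced_iso E V V g \<and> (\<forall>x\<in>A. g x = f x)))"

definition C4_edge :: "nat \<Rightarrow> nat \<Rightarrow> bool" where
  "C4_edge i j \<longleftrightarrow> i < 4 \<and> j = (i + 1) mod 4"

definition iso_to_C4 :: "('a \<Rightarrow> 'a \<Rightarrow> bool) \<Rightarrow> 'a set \<Rightarrow> bool" where
  "iso_to_C4 E A \<longleftrightarrow> (\<exists>h. bij_betw h A {0..<4} \<and>
      (\<forall>x\<in>A. \<forall>y\<in>A. E x y \<longleftrightarrow> C4_edge (h x) (h y)))"

end

theory Submission
  imports Defs
begin

definition cycE :: "('a \<Rightarrow> 'a \<Rightarrow> bool) \<Rightarrow> 'a set \<Rightarrow> 'a \<Rightarrow> 'a \<Rightarrow> 'a \<Rightarrow> 'a \<Rightarrow> bool" where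
  "cycE E S p0 p1 p2 p3 \<longleftrightarrow> distinct [p0,p1,p2,p3] \<and> S = {p0,p1,p2,p3} \<and>
  E p0 p1 \<and> E p1 p2 \<and> E p2 p3 \<and> E p3 p0 \<and>
  \<not> E p0 p0 \<and> \<not> E p1 p1 \<and> \<not> E p2 p2 \<and> \<not> E p3 p3 \<and>
  \<not> E p1 p0 \<and> \<not> E p2 p1 \<and> \<not> E p3 p2 \<and> \<not> E p0 p3 \<and>
  \<not> E p0 p2 \<and> \<not> E p2 p0 \<and> \<not> E p1 p3 \<and> \<not> E p3 p1"

lemma cyc_rot: "cycE E S p0 p1 p2 p3 \<Longrightarrow> cycE E S p1 p2 p3 p0"
  unfolding cycE_def by auto

lemma cyc_at:
  assumes "cycE E S p0 p1 p2 p3" "v \<in> S"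
  shows "\<exists>q1 q2 q3. cycE E S v q1 q2 q3"
proof -
  have "v = p0 \<or> v = p1 \<or> v = p2 \<or> v = p3" using assms unfolding cycE_def by auto
  then show ?thesis using assms cyc_rot by metis
qed

lemma cyc_succ:
  assumes "cycE E S p0 p1 p2 p3" "u \<in> S" "w \<in> S" "w' \<in> S" "E u w" "E u w'"
  shows "w = w'"
  using assms unfolding cycE_def by auto

lemma cyc_pred:
  assumes "cycE E S p0 p1 p2 p3" "u \<in> S" "w \<in> S" "w' \<in> S" "E w u" "E w' u"
  shows "w = w'"
  using assms unfolding cycE_def by auto

lemma cyc_same:
  assumes "cycE E S p0 p1 p2 p3" "cycE E S p0 q1 q2 q3"
  shows "q1 = p1 \<and> q2 = p2 \<and> q3 = p3"
proof -
  have m: "p1 \<in> S" "p2 \<in> S" "p3 \<in> S" "q1 \<in> S" "q2 \<in> S" "q3 \<in> S" "p0 \<in> S"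
    using assms(1) assms(2) unfolding cycE_def by auto
  have e: "E p0 p1" "E p1 p2" "E p2 p3" "E p0 q1" "E q1 q2" "E q2 q3"
    using assms unfolding cycE_def by auto
  have 1: "q1 = p1" using cyc_succ[OF assms(1) m(7) m(4) m(1) e(4) e(1)] .
  have 2: "q2 = p2" using cyc_succ[OF assms(1) m(1) m(5) m(2)] e 1 by auto
  have 3: "q3 = p3" using cyc_succ[OF assms(1) m(2) m(6) m(3)] e 2 by auto
  show ?thesis using 1 2 3 by auto
qed
lemma cycE_set: "cycE E S p0 p1 p2 p3 \<Longrightarrow> S = {p0,p1,p2,p3}" by (simp add: cycE_def)
lemma cycE_dist: "cycE E S p0 p1 p2 p3 \<Longrightarrow> p0 \<noteq> p1 \<and> p0 \<noteq> p2 \<and> p0 \<noteq> p3 \<and> p1 \<noteq> p2 \<and> p1 \<noteq> p3 \<and> p2 \<noteq> p3" by (simp add: cycE_def)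
lemma cycE_edges: "cycE E S p0 p1 p2 p3 \<Longrightarrow> E p0 p1 \<and> E p1 p2 \<and> E p2 p3 \<and> E p3 p0 \<and>
  \<not> E p1 p0 \<and> \<not> E p2 p1 \<and> \<not> E p3 p2 \<and> \<not> E p0 p3 \<and>
  \<not> E p0 p2 \<and> \<not> E p2 p0 \<and> \<not> E p1 p3 \<and> \<not> E p3 p1" by (simp add: cycE_def)

lemma out_mem[simp]: "y \<in> out_nbhd E x \<longleftrightarrow> E x y"
  by (simp add: out_nbhd_def)

lemma out_V: "digraph V E \<Longrightarrow> y \<in> out_nbhd E x \<Longrightarrow> y \<in> V"
  unfolding digraph_def by auto

lemma aut_E: "induced_iso E V V g \<Longrightarrow> u \<in> V \<Longrightarrow> v \<in> V \<Longrightarrow> E (g u) (g v) \<longleftrightarrow> E u v"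
  unfolding induced_iso_def by auto

lemma aut_out:
  assumes dg: "digraph V E" and g: "induced_iso E V V g" and u: "u \<in> V"
  shows "g ` out_nbhd E u = out_nbhd E (g u)"
proof
  show "g ` out_nbhd E u \<subseteq> out_nbhd E (g u)"
    using aut_E[OF g] u out_V[OF dg] by auto
next
  show "out_nbhd E (g u) \<subseteq> g ` out_nbhd E u"
  proof
    fix w assume w: "w \<in> out_nbhd E (g u)"
    then have "w \<in> V" using out_V[OF dg] by blast
    then have "w \<in> g ` V" using g unfolding induced_iso_def bij_betw_def by auto
    then obtain z where z: "z \<in> V" "w = g z" by blast
    then have "E u z" using w aut_E[OF g u z(1)] by simp
    then show "w \<in> g ` out_nbhd E u" using z by auto
  qed
qed

lemma aut_cyc:
  assumes dg: "digraph V E" and g: "induced_iso E V V g" and u: "u \<in> V"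
    and c: "cycE E (out_nbhd E u) p0 p1 p2 p3"
  shows "cycE E (out_nbhd E (g u)) (g p0) (g p1) (g p2) (g p3)"
proof -
  have S: "out_nbhd E u = {p0,p1,p2,p3}" using c unfolding cycE_def by auto
  have "p0 \<in> out_nbhd E u" "p1 \<in> out_nbhd E u" "p2 \<in> out_nbhd E u" "p3 \<in> out_nbhd E u"
    using S by auto
  then have pV: "p0 \<in> V" "p1 \<in> V" "p2 \<in> V" "p3 \<in> V" using out_V[OF dg] by blast+
  have inj: "inj_on g V" using g unfolding induced_iso_def bij_betw_def by auto
  have ginj: "\<And>s t. s \<in> V \<Longrightarrow> t \<in> V \<Longrightarrow> g s = g t \<longleftrightarrow> s = t" using inj inj_on_eq_iff by metis
  have d: "distinct [p0,p1,p2,p3]" using c unfolding cycE_def by auto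
  have S': "out_nbhd E (g u) = {g p0, g p1, g p2, g p3}" using aut_out[OF dg g u] S by auto
  have d': "distinct [g p0, g p1, g p2, g p3]" using d ginj pV by auto
  have ee: "\<And>s t. s \<in> V \<Longrightarrow> t \<in> V \<Longrightarrow> E (g s) (g t) = E s t" using aut_E[OF g] by blast
  show ?thesis using c d' S' unfolding cycE_def by (simp only: ee pV) (simp add: d')
qed

lemma chom_use:
  assumes "C_homogeneous V E" "A \<subseteq> V" "B \<subseteq> V" "finite A" "induced_connected E A" "induced_iso E A B f"
  shows "\<exists>g. induced_iso E V V g \<and> (\<forall>x\<in>A. g x = f x)"
  using assms unfolding C_homogeneous_def by blast

lemma vt:
  assumes dg: "digraph V E" and ch: "C_homogeneous V E" and "x \<in> V" "u \<in> V"
  shows "\<exists>g. induced_iso E V V g \<and> g x = u"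
proof -
  have ic: "induced_connected E {x}" unfolding induced_connected_def by auto
  have ii: "induced_iso E {x} {u} (\<lambda>_. u)"
    using dg unfolding induced_iso_def digraph_def bij_betw_def by auto
  obtain g where "induced_iso E V V g" "\<forall>z\<in>{x}. g z = u"
    using chom_use[OF ch _ _ _ ic ii] assms by auto
  then show ?thesis by auto
qed

lemma at:
  assumes dg: "digraph V E" and ch: "C_homogeneous V E" and e1: "E x a" and e2: "E u v"
  shows "\<exists>g. induced_iso E V V g \<and> g x = u \<and> g a = v"
proof -
  have V: "x \<in> V" "a \<in> V" "u \<in> V" "v \<in> V" using dg e1 e2 unfolding digraph_def by auto
  have ne: "x \<noteq> a" "u \<noteq> v" using dg e1 e2 unfolding digraph_def by auto
  have na: "\<not> E a x" "\<not> E v u" "\<not> E x x" "\<not> E a a" "\<not> E u u" "\<not> E v v"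
    using dg e1 e2 unfolding digraph_def by auto
  let ?R = "\<lambda>s t. s \<in> {x,a} \<and> t \<in> {x,a} \<and> (E s t \<or> E t s)"
  have r1: "?R\<^sup>*\<^sup>* x a" using e1 by (intro r_into_rtranclp) auto
  have r2: "?R\<^sup>*\<^sup>* a x" using e1 by (intro r_into_rtranclp) auto
  have ic: "induced_connected E {x,a}" unfolding induced_connected_def using r1 r2 by auto
  let ?f = "\<lambda>z. if z = x then u else v"
  have ii: "induced_iso E {x,a} {u,v} ?f"
    unfolding induced_iso_def bij_betw_def inj_on_def using ne na e1 e2 by auto
  obtain g where "induced_iso E V V g" "\<forall>z\<in>{x,a}. g z = ?f z"
    using chom_use[OF ch _ _ _ ic ii] V by auto
  then show ?thesis using ne by auto
qed

lemma path3:
  assumes dg: "digraph V E" and ch: "C_homogeneous V E"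
    and e1: "E u v" and e2: "E v w" and e3: "E v w'"
    and n: "\<not> E u w" "\<not> E w u" "\<not> E u w'" "\<not> E w' u"
  shows "\<exists>g. induced_iso E V V g \<and> g u = u \<and> g v = v \<and> g w = w'"
proof -
  have V: "u \<in> V" "v \<in> V" "w \<in> V" "w' \<in> V" using dg e1 e2 e3 unfolding digraph_def by auto
  have irr: "\<And>z. \<not> E z z" and asy: "\<And>s t. E s t \<Longrightarrow> \<not> E t s" using dg unfolding digraph_def by auto
  have ne: "u \<noteq> v" "v \<noteq> w" "v \<noteq> w'" "u \<noteq> w" "u \<noteq> w'"
    using irr asy e1 e2 e3 by metis+
  let ?A = "{u,v,w}"
  let ?R = "\<lambda>s t. s \<in> ?A \<and> t \<in> ?A \<and> (E s t \<or> E t s)"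
  have r: "?R\<^sup>*\<^sup>* u v" "?R\<^sup>*\<^sup>* v u" "?R\<^sup>*\<^sup>* v w" "?R\<^sup>*\<^sup>* w v"
    using e1 e2 by (auto intro!: r_into_rtranclp)
  have r5: "?R\<^sup>*\<^sup>* u w" using rtranclp_trans[OF r(1) r(3)] .
  have r6: "?R\<^sup>*\<^sup>* w u" using rtranclp_trans[OF r(4) r(2)] .
  have rr: "\<forall>s\<in>?A. \<forall>t\<in>?A. ?R\<^sup>*\<^sup>* s t"
    using r r5 r6 by blast
  have ic: "induced_connected E ?A" unfolding induced_connected_def using rr by blast
  let ?f = "\<lambda>z. if z = w then w' else z"
  have eqs: "E u w \<longleftrightarrow> E u w'" "E w u \<longleftrightarrow> E w' u" "E v w \<longleftrightarrow> E v w'" "E w v \<longleftrightarrow> E w' v"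
    "E w w \<longleftrightarrow> E w' w'" using n e2 e3 asy irr by blast+
  have fi: "?f u = u" "?f v = v" "?f w = w'" using ne by auto
  have inj: "inj_on ?f ?A" unfolding inj_on_def using ne by auto
  have im: "?f ` ?A = {u,v,w'}" using fi by auto
  have ed: "\<forall>s\<in>?A. \<forall>t\<in>?A. E s t \<longleftrightarrow> E (?f s) (?f t)"
    using fi eqs by auto
  have ii: "induced_iso E ?A {u,v,w'} ?f"
    unfolding induced_iso_def bij_betw_def using inj im ed by blast
  obtain g where "induced_iso E V V g" "\<forall>z\<in>?A. g z = ?f z"
    using chom_use[OF ch _ _ _ ic ii] V by auto
  then show ?thesis using ne by auto
qed

lemma main:
  assumes dg: "digraph V E" and ch: "C_homogeneous V E" and xV: "x \<in> V"
    and C: "cycE E (out_nbhd E x) a b c d"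
  shows False
proof -
  have oV: "\<And>u y. E u y \<Longrightarrow> y \<in> V" "\<And>u y. E u y \<Longrightarrow> u \<in> V" using dg unfolding digraph_def by auto
  have irr: "\<And>z. \<not> E z z" and asy: "\<And>s t. E s t \<Longrightarrow> \<not> E t s" using dg unfolding digraph_def by auto
  have allcyc: "\<And>u. u \<in> V \<Longrightarrow> \<exists>p0 p1 p2 p3. cycE E (out_nbhd E u) p0 p1 p2 p3"
  proof -
    fix u assume "u \<in> V"
    then obtain g where g: "induced_iso E V V g" "g x = u" using vt[OF dg ch xV] by blast
    show "\<exists>p0 p1 p2 p3. cycE E (out_nbhd E u) p0 p1 p2 p3"
      using aut_cyc[OF dg g(1) xV C] g(2) by blast
  qed
  have cycv: "\<And>u v. E u v \<Longrightarrow> \<exists>q1 q2 q3. cycE E (out_nbhd E u) v q1 q2 q3"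
  proof -
    fix u v assume e: "E u v"
    then obtain p0 p1 p2 p3 where "cycE E (out_nbhd E u) p0 p1 p2 p3" using allcyc oV by blast
    then show "\<exists>q1 q2 q3. cycE E (out_nbhd E u) v q1 q2 q3" using cyc_at e by fastforce
  qed
  have L1: "\<And>u v w w'. E u v \<Longrightarrow> E v w \<Longrightarrow> E v w' \<Longrightarrow> \<not> E u w \<Longrightarrow> \<not> E w u \<Longrightarrow> \<not> E u w' \<Longrightarrow> \<not> E w' u \<Longrightarrow> w = w'"
  proof -
    fix u v w w' assume h: "E u v" "E v w" "E v w'" "\<not> E u w" "\<not> E w u" "\<not> E u w'" "\<not> E w' u"
    obtain g where g: "induced_iso E V V g" "g u = u" "g v = v" "g w = w'"
      using path3[OF dg ch h] by blast
    have uV: "u \<in> V" "v \<in> V" using oV h by auto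
    obtain t q2 q3 where cu: "cycE E (out_nbhd E u) v t q2 q3" using cycv h(1) by blast
    have et: "E v t" "E u t" using cycE_edges[OF cu] cycE_set[OF cu] by (auto simp del: out_mem, metis insertI1 insertI2 out_mem)
    have "cycE E (out_nbhd E u) v (g t) (g q2) (g q3)"
      using aut_cyc[OF dg g(1) uV(1) cu] g by simp
    then have gt: "g t = t" using cyc_same[OF cu] by blast
    obtain q1' q2' q3' where cv: "cycE E (out_nbhd E v) t q1' q2' q3'" using cycv et(1) by blast
    have "cycE E (out_nbhd E v) t (g q1') (g q2') (g q3')"
      using aut_cyc[OF dg g(1) uV(2) cv] g gt by simp
    then have fx: "g q1' = q1' \<and> g q2' = q2' \<and> g q3' = q3'" using cyc_same[OF cv] by blast
    have "w \<in> out_nbhd E v" using h(2) by simp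
    then have "w \<in> {t,q1',q2',q3'}" using cycE_set[OF cv] by blast
    then show "w = w'" using fx gt g(4) by auto
  qed
  have Cf: "E a b" "E b c" "E c d" "E d a" "E x a" "E x b" "E x c" "E x d"
    "\<not> E d b" "\<not> E b d" using cycE_edges[OF C] cycE_set[OF C] by (auto simp del: out_mem, (metis insertI1 insertI2 out_mem)+)
  have aV: "a \<in> V" using oV Cf by auto
  obtain b2 b3 b4 where A: "cycE E (out_nbhd E a) b b2 b3 b4" using cycv Cf(1) by blast
  have Af: "E a b2" "E a b3" "E a b4" "E b b2" "E b2 b3" "E b3 b4" "E b4 b" "\<not> E b b3"
    "b \<noteq> b2" "b \<noteq> b3" "b \<noteq> b4" "b2 \<noteq> b3" "b2 \<noteq> b4" "b3 \<noteq> b4"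
    using cycE_edges[OF A] cycE_dist[OF A] cycE_set[OF A] by (auto simp del: out_mem, (metis insertI1 insertI2 out_mem)+)
  have s1: "\<And>z. z \<in> {b2,b3,b4} \<Longrightarrow> \<not> E x z"
  proof
    fix z assume z: "z \<in> {b2,b3,b4}" "E x z"
    have "E a z" using z Af by auto
    then have "z = b" using cyc_succ[OF C, of a z b] z Cf by auto
    then show False using z Af by auto
  qed
  obtain y q2 q3 where Dd: "cycE E (out_nbhd E d) a y q2 q3" using cycv Cf(4) by blast
  have ey: "E d y" "E a y" using cycE_edges[OF Dd] cycE_set[OF Dd] by (auto simp del: out_mem, metis insertI1 insertI2 out_mem)
  have yin: "y \<in> {b2,b3,b4}"
  proof -
    have "y \<in> out_nbhd E a" using ey by simp
    then have "y \<in> {b,b2,b3,b4}" using cycE_set[OF A] by blast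
    moreover have "y \<noteq> b" using ey Cf by auto
    ultimately show ?thesis by auto
  qed
  obtain r where r: "induced_iso E V V r" "r x = x" "r a = b" using at[OF dg ch Cf(5) Cf(6)] by blast
  have rC: "cycE E (out_nbhd E x) b (r b) (r c) (r d)" using aut_cyc[OF dg r(1) xV C] r by simp
  have rd: "r d = a"
  proof -
    have "E (r d) (r a)" using aut_E[OF r(1)] Cf oV by metis
    then have "E (r d) b" using r by simp
    moreover have "r d \<in> out_nbhd E x" using cycE_set[OF rC] by blast
    ultimately show ?thesis using cyc_pred[OF C, of b "r d" a] Cf by auto
  qed
  have ry: "r y = b2"
  proof -
    have "E (r d) (r y)" "E (r a) (r y)" using aut_E[OF r(1)] ey oV by metis+
    then have "E a (r y)" "E b (r y)" using r rd by auto
    then show ?thesis using cyc_succ[OF A, of b "r y" b2] Af Cf by auto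
  qed
  have rrel: "\<And>z. z \<in> V \<Longrightarrow> (E x (r z) \<longleftrightarrow> E x z) \<and> (E (r z) x \<longleftrightarrow> E z x)"
    using aut_E[OF r(1)] r(2) xV by metis
  obtain h where h: "induced_iso E V V h" "h d = x" "h a = a" using at[OF dg ch Cf(4) Cf(5)] by blast
  have hy: "h y = b"
  proof -
    have "E (h d) (h y)" "E (h a) (h y)" using aut_E[OF h(1)] ey oV by metis+
    then have "E x (h y)" "E a (h y)" using h by auto
    then show ?thesis using cyc_succ[OF C, of a "h y" b] Cf by auto
  qed
  have hA: "cycE E (out_nbhd E a) (h b) (h b2) (h b3) (h b4)"
    using aut_cyc[OF dg h(1) aV A] h by simp
  have hb: "\<not> E x (h b) \<and> \<not> E (h b) x"
    using aut_E[OF h(1)] Cf h oV by metis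
  have b2V: "b2 \<in> V" "b3 \<in> V" "b4 \<in> V" using oV Af by auto
  consider "y = b2" | "y = b3" | "y = b4" using yin by auto
  then show False
  proof cases
    case 1
    have "cycE E (out_nbhd E a) b (h b3) (h b4) (h b)" using hA 1 hy cyc_rot by metis
    then have "h b = b4" using cyc_same[OF A] by blast
    then have n4: "\<not> E x b4" "\<not> E b4 x" using hb by auto
    have "E b2 x" using L1[OF Cf(5) Af(1) Af(3)] n4 s1 Af by auto
    have e3: "E b3 x" using L1[OF Cf(5) Af(2) Af(3)] n4 s1 Af by auto
    have rb2: "r b2 = b2" using ry 1 by simp
    have rA: "cycE E (out_nbhd E b) (r b) b2 (r b3) (r b4)" using aut_cyc[OF dg r(1) aV A] r rb2 by simp
    have f: "E b2 (r b3)" "E b (r b3)" using cycE_edges[OF rA] cycE_set[OF rA] by (auto simp del: out_mem, metis insertI1 insertI2 out_mem)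
    have f2: "E (r b3) x" using rrel[OF b2V(2)] e3 by simp
    have "r b3 = b3"
    proof -
      have b2v: "b2 \<in> V" using b2V by simp
      obtain p0 p1 p2 p3 where cb: "cycE E (out_nbhd E b2) p0 p1 p2 p3" using allcyc[OF b2v] by blast
      show ?thesis using cyc_pred[OF cb, of x "r b3" b3] f f2 e3 Af \<open>E b2 x\<close> by auto
    qed
    then show False using f Af by auto
  next
    case 2
    have "cycE E (out_nbhd E a) b (h b4) (h b) (h b2)" using hA 2 hy cyc_rot by metis
    then have "h b = b3" using cyc_same[OF A] by blast
    then have n3: "\<not> E x b3" "\<not> E b3 x" using hb by auto
    have "r b3 = b2" using ry 2 by simp
    then have n2: "\<not> E x b2" "\<not> E b2 x" using rrel[OF b2V(2)] n3 by auto
    show False using L1[OF Cf(5) Af(1) Af(2)] n2 n3 Af by auto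
  next
    case 3
    have "cycE E (out_nbhd E a) b (h b) (h b2) (h b3)" using hA 3 hy cyc_rot by metis
    then have "h b = b2" using cyc_same[OF A] by blast
    then have n2: "\<not> E x b2" "\<not> E b2 x" using hb by auto
    have "r b4 = b2" using ry 3 by simp
    then have n4: "\<not> E x b4" "\<not> E b4 x" using rrel[OF b2V(3)] n2 by auto
    show False using L1[OF Cf(5) Af(1) Af(3)] n2 n4 Af by auto
  qed
qed

lemma iso_cyc:
  assumes "iso_to_C4 E A"
  shows "\<exists>p0 p1 p2 p3. cycE E A p0 p1 p2 p3"
proof -
  obtain h where h: "bij_betw h A {0..<4}" "\<forall>x\<in>A. \<forall>y\<in>A. E x y \<longleftrightarrow> C4_edge (h x) (h y)"
    using assms unfolding iso_to_C4_def by blast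
  define p where "p i = inv_into A h i" for i
  have pA: "\<And>i. i < 4 \<Longrightarrow> p i \<in> A \<and> h (p i) = i"
    using h(1) unfolding p_def
    by (metis atLeastLessThan_iff bij_betw_def bij_betw_inv_into_right inv_into_into zero_le)
  have Aeq: "A = {p 0, p 1, p 2, p 3}"
  proof
    show "A \<subseteq> {p 0, p 1, p 2, p 3}"
    proof
      fix z assume z: "z \<in> A"
      then have hz: "h z < 4" using h(1) unfolding bij_betw_def by auto
      have pz: "p (h z) = z" using z h(1) unfolding p_def bij_betw_def by auto
      have "h z = 0 \<or> h z = 1 \<or> h z = 2 \<or> h z = 3" using hz by auto
      then show "z \<in> {p 0, p 1, p 2, p 3}" using pz by auto
    qed
    show "{p 0, p 1, p 2, p 3} \<subseteq> A" using pA by auto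
  qed
  have hp: "h (p 0) = 0" "h (p 1) = 1" "h (p 2) = 2" "h (p 3) = 3" using pA by auto
  have pA': "p 0 \<in> A" "p 1 \<in> A" "p 2 \<in> A" "p 3 \<in> A" using pA by auto
  have ne: "\<And>i j. h (p i) \<noteq> h (p j) \<Longrightarrow> p i \<noteq> p j" by auto
  have d: "distinct [p 0, p 1, p 2, p 3]" using ne[of 0 1] ne[of 0 2] ne[of 0 3] ne[of 1 2] ne[of 1 3] ne[of 2 3] hp by simp
  have ee: "\<And>i j. i < 4 \<Longrightarrow> j < 4 \<Longrightarrow> E (p i) (p j) = C4_edge i j" using h(2) pA by auto
  have ed: "E (p 0) (p 1)" "E (p 1) (p 2)" "E (p 2) (p 3)" "E (p 3) (p 0)"
    "\<not> E (p 0) (p 0)" "\<not> E (p 1) (p 1)" "\<not> E (p 2) (p 2)" "\<not> E (p 3) (p 3)"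
    "\<not> E (p 1) (p 0)" "\<not> E (p 2) (p 1)" "\<not> E (p 3) (p 2)" "\<not> E (p 0) (p 3)"
    "\<not> E (p 0) (p 2)" "\<not> E (p 2) (p 0)" "\<not> E (p 1) (p 3)" "\<not> E (p 3) (p 1)"
    by (simp_all only: ee) (simp_all add: C4_edge_def)
  have "cycE E A (p 0) (p 1) (p 2) (p 3)" unfolding cycE_def using d Aeq ed by blast
  then show ?thesis by blast
qed

lemma rev_digraph: "digraph V E \<Longrightarrow> digraph V (\<lambda>u v. E v u)"
  unfolding digraph_def by auto

lemma rev_ch: "C_homogeneous V E \<Longrightarrow> C_homogeneous V (\<lambda>u v. E v u)"
proof -
  assume ch: "C_homogeneous V E"
  have eqR: "\<And>A. (\<lambda>u v. u \<in> A \<and> v \<in> A \<and> (E v u \<or> E u v)) = (\<lambda>u v. u \<in> A \<and> v \<in> A \<and> (E u v \<or> E v u))"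
    by (intro ext) blast
  have ic: "\<And>A. induced_connected (\<lambda>u v. E v u) A = induced_connected E A"
    unfolding induced_connected_def using eqR by simp
  have ii: "\<And>A B f. induced_iso (\<lambda>u v. E v u) A B f = induced_iso E A B f"
    unfolding induced_iso_def by blast
  show ?thesis using ch unfolding C_homogeneous_def ic ii .
qed

theorem lemma3p3:
  fixes V :: "'a set" and E :: "'a \<Rightarrow> 'a \<Rightarrow> bool" and x :: 'a
  assumes "digraph V E"
    and "induced_connected E V"
    and "locally_finite V E"
    and "C_homogeneous V E"
    and "x \<in> V"
  shows "\<not> iso_to_C4 E (out_nbhd E x) \<and> \<not> iso_to_C4 E (in_nbhd E x)"
proof
  show "\<not> iso_to_C4 E (out_nbhd E x)"
  proof
    assume "iso_to_C4 E (out_nbhd E x)"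
    then obtain p0 p1 p2 p3 where c: "cycE E (out_nbhd E x) p0 p1 p2 p3" using iso_cyc by blast
    show False using main[OF assms(1) assms(4) assms(5) c] .
  qed
  show "\<not> iso_to_C4 E (in_nbhd E x)"
  proof
    assume "iso_to_C4 E (in_nbhd E x)"
    then obtain p0 p1 p2 p3 where c: "cycE E (in_nbhd E x) p0 p1 p2 p3" using iso_cyc by blast
    have eq: "in_nbhd E x = out_nbhd (\<lambda>u v. E v u) x" unfolding in_nbhd_def out_nbhd_def by simp
    have "cycE (\<lambda>u v. E v u) (out_nbhd (\<lambda>u v. E v u) x) p3 p2 p1 p0"
      using c unfolding eq[symmetric] cycE_def by auto
    then show False using main[OF rev_digraph[OF assms(1)] rev_ch[OF assms(4)] assms(5)] by blast
  qed
qed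

end
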